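(* Let $\mathcal{G}$ be a locally finite one-ended Borel graph on a standard Borel space $X$ and let $\mathcal{B}$ be a Borel generating set for the cycle space of $\mathcal{G}$. Let $F\subseteq X$ be a finite set such that the induced subgraph $\mathcal{G}[F]$ is connected, and let $H:=\mathcal{G}[F]\setminus\ker(F)$. Then $\mathrm{ext}(H)$ is connected in $H$, i.e. any two vertices of $\mathrm{ext}(H)$ are joined by a path in $\mathcal{G}[F]$ using no edge of $\ker(F)$.
   Context: One-ended: every component is one-ended. The cycle space $\mathcal C(\mathcal G)$ is the subspace of $\mathbb Z_2[E(\mathcal G)]$ (finitely supported edge sets) generated by indicator functions of (finite) cycles. A Borel generating set is a Borel family $\mathcal B$ of finite cycles of $\mathcal G$ whose indicator functions generate $\mathcal C(\mathcal G)$. For an edge $e$, $e^\ast:=\{C\in\mathcal B: e\in E(C)\}$; for $U\subseteq X$, $\ker(U):=\{e\in\mathcal G: \text{every } C\in e^\ast \text{ is contained in } \mathcal G[U]\}$. For a finite subgraph $H$ of $\mathcal G$, the exterior $\mathrm{ext}(H)\subseteq V(H)$ is the set of vertices of $H$ belonging to an $H$-connected component $K$ for which there is an infinite ray in $\mathcal G$ starting at a vertex of $K$ and meeting $H$ only at its starting vertex. *)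

theory Defs
  imports Main
begin

text \<open>A graph on the vertex type 'a is a symmetric irreflexive relation G.
  Edges are unordered pairs {u,v}; edge sets are sets of such doubletons.\<close>

definition graph :: "('a \<times> 'a) set \<Rightarrow> bool" where
  "graph G \<longleftrightarrow> sym G \<and> irrefl G"

definition edges :: "('a \<times> 'a) set \<Rightarrow> 'a set set" where
  "edges G = {{u, v} | u v. (u, v) \<in> G}"

definition locally_finite :: "('a \<times> 'a) set \<Rightarrow> bool" where
  "locally_finite G \<longleftrightarrow> (\<forall>v. finite {w. (v, w) \<in> G})"

definition induced :: "('a \<times> 'a) set \<Rightarrow> 'a set \<Rightarrow> ('a \<times> 'a) set" where
  "induced G S = G \<inter> (S \<times> S)"

definition comp_in :: "('a \<times> 'a) set \<Rightarrow> 'a set \<Rightarrow> 'a \<Rightarrow> 'a set" where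
  "comp_in G D v = {w. (v, w) \<in> (induced G D)\<^sup>*}"

definition components :: "('a \<times> 'a) set \<Rightarrow> 'a set set" where
  "components G = {comp_in G UNIV v | v. True}"

text \<open>Every component is one-ended: it is infinite and, for every finite set S of
  vertices, the component minus S has exactly one infinite connected component
  (the number of ends being the supremum over finite S of the number of infinite
  components of C - S).\<close>
definition one_ended :: "('a \<times> 'a) set \<Rightarrow> bool" where
  "one_ended G \<longleftrightarrow> (\<forall>C \<in> components G. infinite C \<and>
     (\<forall>S. finite S \<longrightarrow>
        (\<exists>!K. K \<in> {comp_in G (C - S) v | v. v \<in> C - S} \<and> infinite K)))"

definition is_cycle :: "('a \<times> 'a) set \<Rightarrow> 'a set set \<Rightarrow> bool" where
  "is_cycle G Z \<longleftrightarrow> (\<exists>vs. length vs \<ge> 3 \<and> distinct vs \<and>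
     (\<forall>i < length vs. (vs ! i, vs ! ((i + 1) mod length vs)) \<in> G) \<and>
     Z = {{vs ! i, vs ! ((i + 1) mod length vs)} | i. i < length vs})"

inductive_set z2span :: "'b set set \<Rightarrow> 'b set set" for S where
  zero: "{} \<in> z2span S"
| add: "A \<in> S \<Longrightarrow> Y \<in> z2span S \<Longrightarrow> (A - Y) \<union> (Y - A) \<in> z2span S"

definition cycle_space :: "('a \<times> 'a) set \<Rightarrow> 'a set set set" where
  "cycle_space G = z2span {Z. is_cycle G Z}"

definition generating_set :: "('a \<times> 'a) set \<Rightarrow> 'a set set set \<Rightarrow> bool" where
  "generating_set G B \<longleftrightarrow> (\<forall>Z \<in> B. is_cycle G Z) \<and> z2span B = cycle_space G"

text \<open>e^* and ker(U). A cycle (given by its edge set Z) is contained in G[U]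
  iff all its vertices lie in U.\<close>
definition estar :: "'a set set set \<Rightarrow> 'a set \<Rightarrow> 'a set set set" where
  "estar B e = {Z \<in> B. e \<in> Z}"

definition ker :: "('a \<times> 'a) set \<Rightarrow> 'a set set set \<Rightarrow> 'a set \<Rightarrow> 'a set set" where
  "ker G B U = {e \<in> edges G. \<forall>Z \<in> estar B e. \<Union>Z \<subseteq> U}"

definition H_graph :: "('a \<times> 'a) set \<Rightarrow> 'a set set set \<Rightarrow> 'a set \<Rightarrow> ('a \<times> 'a) set" where
  "H_graph G B F = {(u, v) \<in> induced G F. {u, v} \<notin> ker G B F}"

definition ray :: "('a \<times> 'a) set \<Rightarrow> (nat \<Rightarrow> 'a) \<Rightarrow> bool" where
  "ray G r \<longleftrightarrow> inj r \<and> (\<forall>n. (r n, r (Suc n)) \<in> G)"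

definition ext :: "('a \<times> 'a) set \<Rightarrow> 'a set \<Rightarrow> ('a \<times> 'a) set \<Rightarrow> 'a set" where
  "ext G V E = {x \<in> V. \<exists>r. ray G r \<and> r 0 \<in> comp_in E V x \<and> (\<forall>n > 0. r n \<notin> V)}"

end

theory Submission imports Defs "HOL-Library.Transitive_Closure_Table" "HOL-Library.Infinite_Set" begin

lemma parity_cyclic:
  fixes P :: "nat \<Rightarrow> bool"
  shows "even (card {i. i < n \<and> P i \<noteq> P ((i + 1) mod n)})"
proof -
  define f where "f i = (if P i then 1 else 0::int)" for i
  have c: "int (card {i. i < n \<and> P i \<noteq> P ((i + 1) mod n)}) =
      (\<Sum>i<n. (if P i \<noteq> P ((i + 1) mod n) then 1 else 0))"
  proof -
    have "{i. i < n \<and> P i \<noteq> P ((i + 1) mod n)} = {..<n} \<inter> {i. P i \<noteq> P ((i + 1) mod n)}" by auto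
    then show ?thesis by (simp add: sum.If_cases)
  qed
  have t: "(if P i \<noteq> P j then 1 else 0::int) = f i + f j - 2 * f i * f j" for i j
    by (simp add: f_def)
  have s: "(\<Sum>i<n. f ((i + 1) mod n)) = (\<Sum>i<n. f i)"
  proof (cases n)
    case 0 then show ?thesis by simp
  next
    case (Suc m)
    have "(\<Sum>i<n. f ((i + 1) mod n)) = (\<Sum>i<m. f ((i + 1) mod n)) + f ((m+1) mod n)"
      using Suc by simp
    also have "(\<Sum>i<m. f ((i + 1) mod n)) = (\<Sum>i<m. f (Suc i))"
      using Suc by (intro sum.cong) auto
    also have "f ((m+1) mod n) = f 0" using Suc by simp
    also have "(\<Sum>i<m. f (Suc i)) + f 0 = (\<Sum>i<n. f i)"
      unfolding Suc sum.lessThan_Suc_shift by simp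
    finally show ?thesis .
  qed
  have "int (card {i. i < n \<and> P i \<noteq> P ((i + 1) mod n)}) =
     2 * ((\<Sum>i<n. f i) - (\<Sum>i<n. f i * f ((i + 1) mod n)))"
    unfolding c t using s by (simp add: sum.distrib sum_subtractf sum_distrib_left algebra_simps)
  then have "even (int (card {i. i < n \<and> P i \<noteq> P ((i + 1) mod n)}))" by simp
  then show ?thesis by simp
qed

lemma cyc_inj:
  assumes "distinct vs" "length vs \<ge> 3"
  shows "inj_on (\<lambda>i. {vs ! i, vs ! ((i + 1) mod length vs)}) {..<length vs}"
proof
  fix i j assume i: "i \<in> {..<length vs}" and j: "j \<in> {..<length vs}"
    and e: "{vs ! i, vs ! ((i + 1) mod length vs)} = {vs ! j, vs ! ((j + 1) mod length vs)}"
  let ?n = "length vs"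
  have inj: "\<And>a b. a < ?n \<Longrightarrow> b < ?n \<Longrightarrow> vs ! a = vs ! b \<Longrightarrow> a = b"
    using assms(1) nth_eq_iff_index_eq by blast
  have mi: "(i + 1) mod ?n < ?n" and mj: "(j + 1) mod ?n < ?n" using assms(2) by (auto intro!: mod_less_divisor)
  from e have "(vs ! i = vs ! j \<and> vs ! ((i + 1) mod ?n) = vs ! ((j + 1) mod ?n)) \<or>
     (vs ! i = vs ! ((j + 1) mod ?n) \<and> vs ! ((i + 1) mod ?n) = vs ! j)"
    by (auto simp: doubleton_eq_iff)
  then show "i = j"
  proof
    assume "vs ! i = vs ! j \<and> vs ! ((i + 1) mod ?n) = vs ! ((j + 1) mod ?n)"
    then show ?thesis using inj i j by auto
  next
    assume h: "vs ! i = vs ! ((j + 1) mod ?n) \<and> vs ! ((i + 1) mod ?n) = vs ! j"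
    then have a: "i = (j + 1) mod ?n" and b: "(i + 1) mod ?n = j" using inj i j mi mj by auto
    have False
    proof (cases "j + 1 < ?n")
      case True
      then have "i = j + 1" using a by simp
      then show False using b assms(2) True
        by (cases "j + 2 < ?n") (auto simp: mod_if split: if_splits)
    next
      case False
      then have "j + 1 = ?n" using j by simp
      then have "i = 0" using a by simp
      then show False using b assms(2) \<open>j + 1 = ?n\<close> by simp
    qed
    then show ?thesis ..
  qed
qed

lemma cycle_cut_even:
  assumes sG: "sym G" and cyc: "is_cycle G Z" and sub: "\<Union>Z \<subseteq> F"
  shows "even (card (Z \<inter> {{u, v} | u v. u \<in> K \<and> v \<in> F - K \<and> (u, v) \<in> G}))"
proof -
  let ?D = "{{u, v} | u v. u \<in> K \<and> v \<in> F - K \<and> (u, v) \<in> G}"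
  obtain vs where l3: "length vs \<ge> 3" and dv: "distinct vs"
    and ed: "\<forall>i < length vs. (vs ! i, vs ! ((i + 1) mod length vs)) \<in> G"
    and Zd: "Z = {{vs ! i, vs ! ((i + 1) mod length vs)} | i. i < length vs}"
    using cyc unfolding is_cycle_def by blast
  define n where "n = length vs"
  define e where "e i = {vs ! i, vs ! ((i + 1) mod n)}" for i
  have Ze: "Z = e ` {..<n}" unfolding Zd e_def n_def by auto
  have mn: "(i + 1) mod n < n" for i using l3 n_def by (auto intro!: mod_less_divisor)
  have inF: "vs ! i \<in> F" if "i < n" for i
  proof -
    have "e i \<in> Z" using Ze that by auto
    then show ?thesis using sub unfolding e_def by auto
  qed
  have iff: "e i \<in> ?D \<longleftrightarrow> (vs ! i \<in> K) \<noteq> (vs ! ((i + 1) mod n) \<in> K)" if i: "i < n" for i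
  proof
    assume "e i \<in> ?D"
    then obtain u v where "e i = {u, v}" "u \<in> K" "v \<notin> K" by auto
    then show "(vs ! i \<in> K) \<noteq> (vs ! ((i + 1) mod n) \<in> K)"
      unfolding e_def by (auto simp: doubleton_eq_iff)
  next
    assume h: "(vs ! i \<in> K) \<noteq> (vs ! ((i + 1) mod n) \<in> K)"
    have g: "(vs ! i, vs ! ((i + 1) mod n)) \<in> G" using ed i n_def by auto
    then have g': "(vs ! ((i + 1) mod n), vs ! i) \<in> G" using sG by (meson symD)
    have f1: "vs ! i \<in> F" "vs ! ((i + 1) mod n) \<in> F" using inF i mn by auto
    show "e i \<in> ?D"
    proof (cases "vs ! i \<in> K")
      case True
      then show ?thesis using h g f1 unfolding e_def by blast
    next
      case False
      then have "e i = {vs ! ((i + 1) mod n), vs ! i}" unfolding e_def by auto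
      then show ?thesis using h g' f1 False by blast
    qed
  qed
  have "Z \<inter> ?D = e ` {i. i < n \<and> (vs ! i \<in> K) \<noteq> (vs ! ((i + 1) mod n) \<in> K)}"
    using iff unfolding Ze by auto
  moreover have "inj_on e {i. i < n \<and> (vs ! i \<in> K) \<noteq> (vs ! ((i + 1) mod n) \<in> K)}"
    using cyc_inj[OF dv l3] unfolding e_def n_def by (rule inj_on_subset) auto
  ultimately have "card (Z \<inter> ?D) = card {i. i < n \<and> (vs ! i \<in> K) \<noteq> (vs ! ((i + 1) mod n) \<in> K)}"
    by (simp add: card_image)
  then show ?thesis using parity_cyclic[where P="\<lambda>i. vs ! i \<in> K" and n=n] by simp
qed

lemma span_even:
  assumes fin: "finite D" and base: "\<And>A. A \<in> B \<Longrightarrow> even (card (A \<inter> D))"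
    and Y: "Y \<in> z2span B"
  shows "even (card (Y \<inter> D))"
  using Y
proof induction
  case zero then show ?case by simp
next
  case (add A Y)
  let ?a = "A \<inter> D" and ?y = "Y \<inter> D"
  have eq: "((A - Y) \<union> (Y - A)) \<inter> D = (?a - ?y) \<union> (?y - ?a)" by auto
  have fa: "finite ?a" "finite ?y" using fin by auto
  have "card ((?a - ?y) \<union> (?y - ?a)) = card (?a - ?y) + card (?y - ?a)"
    using fa by (intro card_Un_disjoint) auto
  also have "card (?a - ?y) = card ?a - card (?a \<inter> ?y)" using fa by (simp add: card_Diff_subset_Int)
  also have "card (?y - ?a) = card ?y - card (?a \<inter> ?y)" using fa
    by (simp add: card_Diff_subset_Int Int_commute)
  finally have c: "card (((A - Y) \<union> (Y - A)) \<inter> D) = (card ?a - card (?a \<inter> ?y)) + (card ?y - card (?a \<inter> ?y))"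
    using eq by simp
  have le: "card (?a \<inter> ?y) \<le> card ?a" "card (?a \<inter> ?y) \<le> card ?y" using fa
    by (auto intro: card_mono)
  have "even (card ?a)" using base add by auto
  moreover have "even (card ?y)" using add by auto
  ultimately show ?case unfolding c using le by presburger
qed

lemma first_cross:
  assumes "(a, b) \<in> R\<^sup>*" "a \<notin> K" "b \<in> K"
  shows "\<exists>c d. (a, c) \<in> (R \<inter> ((- K) \<times> (- K)))\<^sup>* \<and> (c, d) \<in> R \<and> c \<notin> K \<and> d \<in> K"
  using assms
proof (induction rule: converse_rtrancl_induct)
  case base then show ?case by simp
next
  case (step y z)
  show ?case
  proof (cases "z \<in> K")
    case True then show ?thesis using step by blast
  next
    case False
    then obtain c d where "(z, c) \<in> (R \<inter> ((- K) \<times> (- K)))\<^sup>*" "(c, d) \<in> R" "c \<notin> K" "d \<in> K"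
      using step by blast
    moreover have "(y, z) \<in> R \<inter> ((- K) \<times> (- K))" using step False by auto
    ultimately show ?thesis by (meson converse_rtrancl_into_rtrancl)
  qed
qed

lemma rt_in:
  assumes "(a, b) \<in> R\<^sup>*" "R \<subseteq> F \<times> F" "a \<in> F" shows "b \<in> F"
  using assms by (induction rule: rtrancl_induct) auto

lemma ray_tail:
  assumes r: "ray G r" and out: "\<forall>n>0. r n \<notin> F" and C: "C = comp_in G UNIV c"
    and r0: "r 0 \<in> C"
  shows "r 1 \<in> C - F" "infinite (comp_in G (C - F) (r 1))"
proof -
  have iG: "induced G UNIV = G" unfolding induced_def by auto
  have e: "(r n, r (Suc n)) \<in> G" for n using r unfolding ray_def by auto
  have inC: "r n \<in> C" for n
  proof (induction n)
    case 0 then show ?case using r0 .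
  next
    case (Suc n)
    then have "(c, r n) \<in> G\<^sup>*" using C iG unfolding comp_in_def by auto
    then have "(c, r (Suc n)) \<in> G\<^sup>*" using e by (meson rtrancl.rtrancl_into_rtrancl)
    then show ?case using C iG unfolding comp_in_def by auto
  qed
  have p: "(r 1, r (Suc n)) \<in> (induced G (C - F))\<^sup>*" for n
  proof (induction n)
    case 0 then show ?case by simp
  next
    case (Suc n)
    have "(r (Suc n), r (Suc (Suc n))) \<in> induced G (C - F)"
      using e inC out unfolding induced_def by auto
    then show ?case using Suc by (meson rtrancl.rtrancl_into_rtrancl)
  qed
  show "r 1 \<in> C - F" using inC out by auto
  have "range (\<lambda>n. r (Suc n)) \<subseteq> comp_in G (C - F) (r 1)"
    using p unfolding comp_in_def by auto
  moreover have "inj (\<lambda>n. r (Suc n))" using r unfolding ray_def inj_def by auto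
  then have "infinite (range (\<lambda>n. r (Suc n)))" by (rule range_inj_infinite)
  ultimately show "infinite (comp_in G (C - F) (r 1))" using finite_subset by blast
qed

theorem lemma3p14:
  fixes G :: "('a \<times> 'a) set" and B :: "'a set set set" and F :: "'a set"
  assumes "graph G" and "locally_finite G" and "one_ended G"
    and "generating_set G B"
    and "finite F"
    and "\<forall>x \<in> F. \<forall>y \<in> F. (x, y) \<in> (induced G F)\<^sup>*"
  shows "\<forall>x \<in> ext G F (H_graph G B F). \<forall>y \<in> ext G F (H_graph G B F).
           (x, y) \<in> (H_graph G B F)\<^sup>*"
proof (intro ballI, rule ccontr)
  fix x y
  assume xe: "x \<in> ext G F (H_graph G B F)" and ye: "y \<in> ext G F (H_graph G B F)"
    and nxy: "(x, y) \<notin> (H_graph G B F)\<^sup>*"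
  define H where "H = H_graph G B F"
  have sG: "sym G" using assms(1) unfolding graph_def by auto
  have HF: "H \<subseteq> F \<times> F" unfolding H_def H_graph_def induced_def by auto
  have iH: "induced H F = H" using HF unfolding induced_def by auto
  have sH: "sym H" unfolding H_def H_graph_def induced_def
    using sG by (auto simp: sym_def insert_commute)
  have sHs: "(a, b) \<in> H\<^sup>* \<Longrightarrow> (b, a) \<in> H\<^sup>*" for a b
    using sH by (meson sym_rtrancl symD)
  define K where "K = {w. (x, w) \<in> H\<^sup>*}"
  obtain rx where rx: "ray G rx" "rx 0 \<in> comp_in H F x" "\<forall>n>0. rx n \<notin> F" and xF: "x \<in> F"
    using xe unfolding ext_def H_def by blast
  obtain ry where ry: "ray G ry" "ry 0 \<in> comp_in H F y" "\<forall>n>0. ry n \<notin> F" and yF: "y \<in> F"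
    using ye unfolding ext_def H_def by blast
  have rx0K: "rx 0 \<in> K" using rx(2) iH unfolding comp_in_def K_def by auto
  have KF: "K \<subseteq> F" using rt_in[OF _ HF xF] unfolding K_def by auto
  have ry0: "(y, ry 0) \<in> H\<^sup>*" using ry(2) iH unfolding comp_in_def by auto
  have ry0F: "ry 0 \<in> F" using rt_in[OF ry0 HF yF] .
  have ry0K: "ry 0 \<notin> K"
  proof
    assume "ry 0 \<in> K"
    then have "(x, ry 0) \<in> H\<^sup>*" unfolding K_def by auto
    then have "(x, y) \<in> H\<^sup>*" using sHs[OF ry0] by (meson rtrancl_trans)
    then show False using nxy H_def by simp
  qed
  have rx0F: "rx 0 \<in> F" using rx0K KF by auto
  define D where "D = {{u, v} | u v. u \<in> K \<and> v \<in> F - K \<and> (u, v) \<in> G}"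
  have Dker: "D \<subseteq> ker G B F"
  proof
    fix e assume "e \<in> D"
    then obtain u v where e: "e = {u, v}" "u \<in> K" "v \<in> F - K" "(u, v) \<in> G"
      unfolding D_def by auto
    show "e \<in> ker G B F"
    proof (rule ccontr)
      assume "e \<notin> ker G B F"
      then have "(u, v) \<in> H" using e KF unfolding H_def H_graph_def induced_def by auto
      have "(x, u) \<in> H\<^sup>*" using e(2) K_def by simp
      then have "(x, v) \<in> H\<^sup>*" using \<open>(u, v) \<in> H\<close> by (rule rtrancl_into_rtrancl)
      then have "v \<in> K" using K_def by simp
      then show False using e by auto
    qed
  qed
  have finD: "finite D"
  proof -
    have "D \<subseteq> Pow F" unfolding D_def using KF by auto
    then show ?thesis using assms(5) by (meson finite_Pow_iff finite_subset)
  qed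
  have Bcyc: "\<forall>Z \<in> B. is_cycle G Z" and spanB: "z2span B = cycle_space G"
    using assms(4) unfolding generating_set_def by auto
  have evB: "even (card (A \<inter> D))" if A: "A \<in> B" for A
  proof (cases "A \<inter> D = {}")
    case True then show ?thesis by simp
  next
    case False
    then obtain e where "e \<in> A" "e \<in> D" by auto
    then have "e \<in> ker G B F" using Dker by auto
    then have "\<Union>A \<subseteq> F" using A \<open>e \<in> A\<close> unfolding ker_def estar_def by auto
    then show ?thesis using cycle_cut_even[OF sG Bcyc[rule_format, OF A]] unfolding D_def by blast
  qed
  have evY: "even (card (Y \<inter> D))" if "Y \<in> z2span B" for Y
    using span_even[OF finD evB that] by blast
  define G' where "G' = {(a, b) \<in> G. {a, b} \<notin> D}"
  have DF: "\<And>a b. {a, b} \<in> D \<Longrightarrow> a \<in> F \<and> b \<in> F" unfolding D_def using KF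
    by (auto simp: doubleton_eq_iff)
  have HG': "H \<subseteq> G'"
  proof
    fix p assume "p \<in> H"
    then obtain a b where p: "p = (a, b)" "(a, b) \<in> G" "{a, b} \<notin> ker G B F"
      unfolding H_def H_graph_def induced_def by auto
    then show "p \<in> G'" using Dker unfolding G'_def by auto
  qed
  have HG's: "H\<^sup>* \<subseteq> G'\<^sup>*" using HG' by (rule rtrancl_mono)
  have outG': "(a, b) \<in> G \<Longrightarrow> a \<notin> F \<or> b \<notin> F \<Longrightarrow> (a, b) \<in> G'" for a b
    using DF unfolding G'_def by auto
  define C where "C = comp_in G UNIV (rx 0)"
  have iG: "induced G UNIV = G" unfolding induced_def by auto
  have rx0C: "rx 0 \<in> C" unfolding C_def comp_in_def by simp
  have CinComp: "C \<in> components G" unfolding C_def components_def by auto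
  have "(rx 0, ry 0) \<in> (induced G F)\<^sup>*" using assms(6) rx0F ry0F by auto
  moreover have "induced G F \<subseteq> G" unfolding induced_def by auto
  ultimately have "(rx 0, ry 0) \<in> G\<^sup>*" using rtrancl_mono by blast
  then have ry0C: "ry 0 \<in> C" unfolding C_def comp_in_def iG by simp
  note tx = ray_tail[OF rx(1) rx(3) C_def rx0C]
  note ty = ray_tail[OF ry(1) ry(3) C_def ry0C]
  have h0: "infinite C \<and> (\<forall>S. finite S \<longrightarrow>
        (\<exists>!K. K \<in> {comp_in G (C - S) v | v. v \<in> C - S} \<and> infinite K))"
    using assms(3) CinComp unfolding one_ended_def by (rule bspec)
  define Q where "Q = {comp_in G (C - F) v | v. v \<in> C - F}"
  have ex1: "\<exists>!K'. K' \<in> Q \<and> infinite K'"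
    unfolding Q_def using h0[THEN conjunct2, rule_format, OF assms(5)] .
  have m1: "comp_in G (C - F) (rx 1) \<in> Q" unfolding Q_def using tx(1) by blast
  have m2: "comp_in G (C - F) (ry 1) \<in> Q" unfolding Q_def using ty(1) by blast
  obtain K0 where k0: "\<forall>K'. K' \<in> Q \<and> infinite K' \<longrightarrow> K' = K0"
    using ex1 unfolding Ex1_def by blast
  have eqc: "comp_in G (C - F) (rx 1) = comp_in G (C - F) (ry 1)"
    using k0 m1 m2 tx(2) ty(2) by blast
  have "ry 1 \<in> comp_in G (C - F) (ry 1)" unfolding comp_in_def by simp
  then have "ry 1 \<in> comp_in G (C - F) (rx 1)" using eqc by simp
  then have "(rx 1, ry 1) \<in> (induced G (C - F))\<^sup>*" unfolding comp_in_def by simp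
  moreover have "induced G (C - F) \<subseteq> G'" using outG' unfolding induced_def by auto
  ultimately have m: "(rx 1, ry 1) \<in> G'\<^sup>*" using rtrancl_mono by blast
  have a1: "(rx 0, rx 1) \<in> G'" using rx(1) rx(3) outG' unfolding ray_def by auto
  have "(ry 0, ry 1) \<in> G" using ry(1) unfolding ray_def by (metis One_nat_def)
  then have "(ry 1, ry 0) \<in> G" using sG by (meson symD)
  moreover have "ry 1 \<notin> F" using ry(3) by simp
  ultimately have a2: "(ry 1, ry 0) \<in> G'" using outG' by blast
  have xry: "(rx 0, ry 0) \<in> G'\<^sup>*" using a1 m a2
    by (meson converse_rtrancl_into_rtrancl rtrancl.rtrancl_into_rtrancl)
  have "(ry 0, x) \<in> (induced G F)\<^sup>*" using assms(6) xF ry0F by auto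
  moreover have "x \<in> K" unfolding K_def by simp
  ultimately obtain c d where cd: "(ry 0, c) \<in> (induced G F \<inter> ((- K) \<times> (- K)))\<^sup>*"
    "(c, d) \<in> induced G F" "c \<notin> K" "d \<in> K"
    using first_cross[of "ry 0" x "induced G F" K] ry0K by blast
  have "induced G F \<inter> ((- K) \<times> (- K)) \<subseteq> G'" unfolding G'_def D_def induced_def
    by (auto simp: doubleton_eq_iff)
  then have cp: "(ry 0, c) \<in> G'\<^sup>*" using cd(1) rtrancl_mono by blast
  have cF: "c \<in> F" "d \<in> F" using cd(2) unfolding induced_def by auto
  have cdG: "(c, d) \<in> G" using cd(2) unfolding induced_def by auto
  have dcD: "{d, c} \<in> D" unfolding D_def using cd cF cdG sG by (auto dest: symD)
  have "(d, x) \<in> G'\<^sup>*" using HG's sHs cd(4) unfolding K_def by blast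
  moreover have "(x, rx 0) \<in> G'\<^sup>*" using HG's rx0K unfolding K_def by blast
  ultimately have dc: "(d, c) \<in> G'\<^sup>*" using xry cp by (meson rtrancl_trans)
  have "(\<lambda>a b. (a, b) \<in> G')\<^sup>*\<^sup>* d c" using dc by (simp add: rtrancl_def)
  then obtain xs0 where "rtrancl_path (\<lambda>a b. (a, b) \<in> G') d xs0 c"
    using rtranclp_eq_rtrancl_path by metis
  then obtain xs where pth: "rtrancl_path (\<lambda>a b. (a, b) \<in> G') d xs c" and dxs: "distinct (d # xs)"
    using rtrancl_path_distinct by metis
  have dnc: "d \<noteq> c" using cd by auto
  have xsne: "xs \<noteq> []" using pth dnc by (cases rule: rtrancl_path.cases) auto
  have lastxs: "last xs = c" using rtrancl_path_last[OF pth xsne] .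
  have steps: "((d # xs) ! i, xs ! i) \<in> G'" if "i < length xs" for i
    using rtrancl_path_nth[OF pth that] by simp
  have len2: "length xs \<ge> 2"
  proof (rule ccontr)
    assume "\<not> length xs \<ge> 2"
    moreover have "length xs \<noteq> 0" using xsne by simp
    ultimately have "length xs = 1" by arith
    then have "xs = [c]" using lastxs by (cases xs) auto
    then have "(d, c) \<in> G'" using steps[of 0] by simp
    then show False using dcD unfolding G'_def by auto
  qed
  define vs where "vs = d # xs"
  define n where "n = length vs"
  have n: "n = Suc (length xs)" unfolding n_def vs_def by simp
  have ed: "(vs ! i, vs ! ((i + 1) mod n)) \<in> G \<and>
      ({vs ! i, vs ! ((i + 1) mod n)} \<in> D \<longleftrightarrow> i = length xs)" if i: "i < n" for i
  proof (cases "i < length xs")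
    case True
    then have "(i + 1) mod n = Suc i" using n by simp
    then have "(vs ! i, vs ! ((i + 1) mod n)) \<in> G'" using steps[OF True] unfolding vs_def by simp
    then show ?thesis using True unfolding G'_def by auto
  next
    case False
    then have ii: "i = length xs" using i n by simp
    then have "(i + 1) mod n = 0" using n by simp
    moreover have "vs ! i = c" using ii lastxs xsne unfolding vs_def by (simp add: last_conv_nth)
    ultimately show ?thesis using ii cdG dcD unfolding vs_def by (simp add: insert_commute)
  qed
  define Z where "Z = {{vs ! i, vs ! ((i + 1) mod n)} | i. i < n}"
  have cycZ: "is_cycle G Z" unfolding is_cycle_def
    apply (rule exI[of _ vs])
    using ed len2 dxs n unfolding Z_def n_def vs_def by auto
  have e1: "{vs ! length xs, vs ! ((length xs + 1) mod n)} \<in> D"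
    using ed[of "length xs"] n by blast
  have "Z \<inter> D = {{vs ! length xs, vs ! ((length xs + 1) mod n)}}"
    using ed n e1 unfolding Z_def by auto
  then have "card (Z \<inter> D) = 1" by simp
  moreover have "Z \<in> z2span B"
  proof -
    have "(Z - {}) \<union> ({} - Z) \<in> z2span {Z. is_cycle G Z}"
      using z2span.add[OF _ z2span.zero] cycZ by blast
    then show ?thesis using spanB unfolding cycle_space_def by simp
  qed
  ultimately show False using evY by fastforce
qed

end
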